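(* There exist absolute constants $c>0$ and $n_0$ such that for every $n\ge n_0$ and every $p$ with $\frac{100}{n}\le p\le 1-\frac{100}{n}$, if $G\sim G(n,p)$ then with probability at least $1-e^{-cn}$, $G$ contains at least $n/100$ pairwise vertex-disjoint induced copies of $P_3$.
   Context: $G(n,p)$ is the binomial random graph on $n$ labelled vertices. $P_3$ denotes the path with three edges (four vertices). *)

theory Defs
  imports Complex_Main
begin

text \<open>Graphs on the labelled vertex set {0..<n} are represented by their edge sets,
  an edge being a 2-element set of vertices.\<close>

definition all_edges :: "nat \<Rightarrow> nat set set" where
  "all_edges n = {{u, v} | u v. u < n \<and> v < n \<and> u \<noteq> v}"

text \<open>Probability that G(n,p) (each of the n choose 2 edges present independently
  with probability p) satisfies property P.\<close>

definition gnp_prob :: "nat \<Rightarrow> real \<Rightarrow> (nat set set \<Rightarrow> bool) \<Rightarrow> real" where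
  "gnp_prob n p P =
     (\<Sum>E\<in>Pow (all_edges n).
        if P E then p ^ card E * (1 - p) ^ (card (all_edges n) - card E) else 0)"

text \<open>An induced copy of P_3 (path a-b-c-d with three edges) in the graph with edge set E
  on vertex set {0..<n}.\<close>

definition induced_P3 :: "nat \<Rightarrow> nat set set \<Rightarrow> nat \<times> nat \<times> nat \<times> nat \<Rightarrow> bool" where
  "induced_P3 n E t = (case t of (a, b, c, d) \<Rightarrow>
      distinct [a, b, c, d] \<and> a < n \<and> b < n \<and> c < n \<and> d < n \<and>
      {a, b} \<in> E \<and> {b, c} \<in> E \<and> {c, d} \<in> E \<and>
      {a, c} \<notin> E \<and> {b, d} \<notin> E \<and> {a, d} \<notin> E)"

definition tuple_verts :: "nat \<times> nat \<times> nat \<times> nat \<Rightarrow> nat set" where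
  "tuple_verts t = (case t of (a, b, c, d) \<Rightarrow> {a, b, c, d})"

definition has_disjoint_induced_P3s :: "nat \<Rightarrow> nat set set \<Rightarrow> nat \<Rightarrow> bool" where
  "has_disjoint_induced_P3s n E k =
     (\<exists>xs. length xs = k \<and> (\<forall>t\<in>set xs. induced_P3 n E t) \<and>
        (\<forall>i<k. \<forall>j<k. i \<noteq> j \<longrightarrow> tuple_verts (xs ! i) \<inter> tuple_verts (xs ! j) = {}))"

end

theory Submission
  imports Defs
begin


definition P4free :: "('a \<Rightarrow> 'a \<Rightarrow> bool) \<Rightarrow> 'a set \<Rightarrow> bool" where
  "P4free adj S \<longleftrightarrow> (\<forall>a\<in>S. \<forall>b\<in>S. \<forall>c\<in>S. \<forall>d\<in>S. distinct [a,b,c,d] \<longrightarrow>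
      adj a b \<longrightarrow> adj b c \<longrightarrow> adj c d \<longrightarrow> adj a c \<or> adj b d \<or> adj a d)"

definition anti :: "('a \<Rightarrow> 'a \<Rightarrow> bool) \<Rightarrow> 'a set \<Rightarrow> 'a set \<Rightarrow> bool" where
  "anti adj A B \<longleftrightarrow> (\<forall>a\<in>A. \<forall>b\<in>B. \<not> adj a b)"

definition compl :: "('a \<Rightarrow> 'a \<Rightarrow> bool) \<Rightarrow> 'a set \<Rightarrow> 'a set \<Rightarrow> bool" where
  "compl adj A B \<longleftrightarrow> (\<forall>a\<in>A. \<forall>b\<in>B. adj a b)"

definition homsplit :: "('a \<Rightarrow> 'a \<Rightarrow> bool) \<Rightarrow> 'a set \<Rightarrow> bool" where
  "homsplit adj S \<longleftrightarrow> (\<exists>A B. A \<union> B = S \<and> A \<inter> B = {} \<and> A \<noteq> {} \<and> B \<noteq> {} \<and>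
      (anti adj A B \<or> compl adj A B))"

lemma P4free_mono: "P4free adj S \<Longrightarrow> T \<subseteq> S \<Longrightarrow> P4free adj T"
  unfolding P4free_def by blast

lemma P4free_compl:
  assumes sym: "\<And>x y. adj x y = adj y x" and "P4free adj S"
  shows "P4free (\<lambda>x y. \<not> adj x y) S"
  unfolding P4free_def
proof (intro ballI impI)
  fix a b c d assume abcd: "a\<in>S" "b\<in>S" "c\<in>S" "d\<in>S" "distinct [a,b,c,d]"
    and h: "\<not> adj a b" "\<not> adj b c" "\<not> adj c d"
  show "\<not> adj a c \<or> \<not> adj b d \<or> \<not> adj a d"
  proof (rule ccontr)
    assume "\<not> ?thesis"
    hence "adj c a" "adj a d" "adj d b" using sym by auto
    moreover have "distinct [c,a,d,b]" using abcd by auto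
    ultimately have "adj c d \<or> adj a b \<or> adj c b"
      using assms(2) abcd unfolding P4free_def by blast
    thus False using h sym by auto
  qed
qed

lemma core_x:
  assumes sym: "\<And>x y. adj x y = adj y x"
    and P: "P4free adj (insert v (A \<union> B))" and v: "v \<notin> A \<union> B"
    and AB: "A \<inter> B = {}" and ant: "anti adj A B"
    and b1: "b1 \<in> B" "adj v b1" and x: "x \<in> A" "\<not> adj v x"
  shows "homsplit adj (insert v (A \<union> B))"
proof (cases "\<exists>y\<in>A. \<exists>x'\<in>A. adj v y \<and> \<not> adj v x' \<and> adj y x'")
  case True
  then obtain y x' where y: "y \<in> A" "x' \<in> A" "adj v y" "\<not> adj v x'" "adj y x'" by blast
  have d: "distinct [x', y, v, b1]" using y v b1 x AB by auto
  have "adj x' y" "adj y v" "adj v b1" using y b1 sym by auto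
  hence "adj x' v \<or> adj y b1 \<or> adj x' b1"
    using P d y b1 unfolding P4free_def by blast
  moreover have "\<not> adj y b1" "\<not> adj x' b1" using ant y b1 unfolding anti_def by auto
  ultimately show ?thesis using y sym by auto
next
  case False
  let ?N = "{a\<in>A. adj v a}"
  show ?thesis unfolding homsplit_def
  proof (intro exI conjI)
    show "(A - ?N) \<union> insert v (?N \<union> B) = insert v (A \<union> B)" by auto
    show "(A - ?N) \<inter> insert v (?N \<union> B) = {}" using v AB by auto
    show "A - ?N \<noteq> {}" using x by auto
    show "insert v (?N \<union> B) \<noteq> {}" by auto
    show "anti adj (A - ?N) (insert v (?N \<union> B)) \<or> compl adj (A - ?N) (insert v (?N \<union> B))"
      using False ant sym unfolding anti_def by blast
  qed
qed

lemma core: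
  assumes sym: "\<And>x y. adj x y = adj y x"
    and P: "P4free adj (insert v (A \<union> B))" and v: "v \<notin> A \<union> B"
    and AB: "A \<inter> B = {}" "A \<noteq> {}" "B \<noteq> {}" and ant: "anti adj A B"
  shows "homsplit adj (insert v (A \<union> B))"
proof -
  have antB: "anti adj B A" using ant sym unfolding anti_def by auto
  show ?thesis
  proof (cases "\<forall>a\<in>A. \<not> adj v a")
    case True
    show ?thesis unfolding homsplit_def
      apply (rule exI[of _ A], rule exI[of _ "insert v B"])
      using True ant v AB sym unfolding anti_def by auto
  next
    case F1: False
    show ?thesis
    proof (cases "\<forall>b\<in>B. \<not> adj v b")
      case True
      show ?thesis unfolding homsplit_def
        apply (rule exI[of _ B], rule exI[of _ "insert v A"])
        using True antB v AB sym unfolding anti_def by auto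
    next
      case F2: False
      then obtain b1 where b1: "b1 \<in> B" "adj v b1" by auto
      from F1 obtain a1 where a1: "a1 \<in> A" "adj v a1" by auto
      show ?thesis
      proof (cases "\<forall>x\<in>A \<union> B. adj v x")
        case True
        show ?thesis unfolding homsplit_def
          apply (rule exI[of _ "{v}"], rule exI[of _ "A \<union> B"])
          using True v AB unfolding compl_def by auto
      next
        case False
        then obtain x where x: "x \<in> A \<union> B" "\<not> adj v x" by auto
        show ?thesis
        proof (cases "x \<in> A")
          case True
          show ?thesis using core_x[OF sym P v AB(1) ant b1 True x(2)] .
        next
          case False
          hence "x \<in> B" using x by auto
          have "homsplit adj (insert v (B \<union> A))"
            apply (rule core_x[OF sym _ _ _ antB a1 \<open>x \<in> B\<close> x(2)])
            using P v AB by (auto simp: Un_commute Int_commute)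
          thus ?thesis by (simp add: Un_commute)
        qed
      qed
    qed
  qed
qed

lemma homsplit_compl:
  "homsplit (\<lambda>x y. \<not> adj x y) S \<Longrightarrow> homsplit adj S"
  unfolding homsplit_def anti_def compl_def by blast

lemma seinsche:
  assumes sym: "\<And>x y. adj x y = adj y x"
  shows "finite S \<Longrightarrow> 2 \<le> card S \<Longrightarrow> P4free adj S \<Longrightarrow> homsplit adj S"
proof (induction S rule: finite_induct)
  case empty thus ?case by simp
next
  case (insert v S)
  show ?case
  proof (cases "card S < 2")
    case True
    hence "card S = 1" using insert by auto
    then obtain w where w: "S = {w}" using card_1_singletonE by blast
    show ?thesis unfolding homsplit_def
      apply (rule exI[of _ "{v}"], rule exI[of _ "{w}"])
      using w insert unfolding anti_def compl_def by auto
  next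
    case False
    hence "homsplit adj S" using insert P4free_mono[of adj "insert v S" S] by auto
    then obtain A B where AB: "A \<union> B = S" "A \<inter> B = {}" "A \<noteq> {}" "B \<noteq> {}"
      "anti adj A B \<or> compl adj A B" unfolding homsplit_def by blast
    show ?thesis
    proof (cases "anti adj A B")
      case True
      show ?thesis using core[of adj v A B, OF sym] insert AB True by auto
    next
      case False
      hence c: "anti (\<lambda>x y. \<not> adj x y) A B" using AB unfolding anti_def compl_def by auto
      have "homsplit (\<lambda>x y. \<not> adj x y) (insert v (A \<union> B))"
        apply (rule core[of "\<lambda>x y. \<not> adj x y"])
        using sym apply simp
        using P4free_compl[OF sym insert(5)] AB apply simp
        using insert AB c by auto
      thus ?thesis using homsplit_compl AB by auto
    qed
  qed
qed


lemma homsplit_ordered: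
  assumes sym: "\<And>x y. adj x y = adj y x" and "finite S" and "homsplit adj S"
  obtains A B where "A \<union> B = S" "A \<inter> B = {}" "A \<noteq> {}" "B \<noteq> {}"
      "anti adj A B \<or> compl adj A B" "card A \<le> card B"
proof -
  obtain A B where AB: "A \<union> B = S" "A \<inter> B = {}" "A \<noteq> {}" "B \<noteq> {}"
      "anti adj A B \<or> compl adj A B" using assms(3) unfolding homsplit_def by blast
  show ?thesis
  proof (cases "card A \<le> card B")
    case True thus ?thesis using that AB by blast
  next
    case False
    have "anti adj B A \<or> compl adj B A" using AB(5) sym unfolding anti_def compl_def by auto
    thus ?thesis using that[of B A] AB False by auto
  qed
qed

lemma peel:
  assumes sym: "\<And>x y. adj x y = adj y x"
  shows "finite S \<Longrightarrow> P4free adj S \<Longrightarrow> finite U \<Longrightarrow> finite V \<Longrightarrow> U \<inter> S = {} \<Longrightarrow> V \<inter> S = {} \<Longrightarrow>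
    anti adj U S \<Longrightarrow> compl adj V S \<Longrightarrow> card U < m \<Longrightarrow> card V < m \<Longrightarrow>
    4 * m \<le> card S + card U + card V \<Longrightarrow>
    \<exists>X Y. X \<subseteq> S \<union> U \<union> V \<and> Y \<subseteq> S \<union> U \<union> V \<and> X \<inter> Y = {} \<and> m \<le> card X \<and> m \<le> card Y \<and>
      (anti adj X Y \<or> compl adj X Y)"
proof (induction "card S" arbitrary: S U V rule: less_induct)
  case less
  have "2 \<le> card S" using less.prems by linarith
  hence "homsplit adj S" by (rule seinsche[of adj S, OF sym less.prems(1) _ less.prems(2)])
  then obtain A B where AB: "A \<union> B = S" "A \<inter> B = {}" "A \<noteq> {}" "B \<noteq> {}"
      "anti adj A B \<or> compl adj A B" "card A \<le> card B"
    by (rule homsplit_ordered[of adj S, OF sym less.prems(1)]) blast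
  have fA: "finite A" "finite B" using AB less.prems(1) by auto
  have cS: "card S = card A + card B" using AB fA card_Un_disjoint by metis
  have ltB: "card B < card S" using cS AB(3) fA by auto
  show ?case
  proof (cases "m \<le> card A")
    case True
    have "A \<subseteq> S \<union> U \<union> V" "B \<subseteq> S \<union> U \<union> V" using AB(1) by blast+
    moreover have "m \<le> card B" using True AB(6) by linarith
    ultimately show ?thesis using AB(2,5) True by blast
  next
    case small: False
    show ?thesis
    proof (cases "anti adj A B")
      case True
      have "U \<inter> A = {}" using less.prems(5) AB by auto
      hence cU: "card (U \<union> A) = card U + card A"
        using card_Un_disjoint less.prems(3) fA by blast
      have antU: "anti adj (U \<union> A) B" using True less.prems(7) AB unfolding anti_def by auto
      show ?thesis
      proof (cases "m \<le> card (U \<union> A)")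
        case True
        have "m \<le> card B" using cU cS less.prems small True by linarith
        have "U \<inter> B = {}" using less.prems(5) AB by auto
        moreover have "U \<union> A \<subseteq> S \<union> U \<union> V" "B \<subseteq> S \<union> U \<union> V" using AB(1) by blast+
        moreover have "(U \<union> A) \<inter> B = {}" using calculation(1) AB(2) by blast
        ultimately show ?thesis using True antU \<open>m \<le> card B\<close> by blast
      next
        case False
        have "\<exists>X Y. X \<subseteq> B \<union> (U \<union> A) \<union> V \<and> Y \<subseteq> B \<union> (U \<union> A) \<union> V \<and> X \<inter> Y = {} \<and> m \<le> card X \<and> m \<le> card Y \<and>
           (anti adj X Y \<or> compl adj X Y)"
        proof (rule less.hyps[OF ltB])
          show "finite B" "finite (U \<union> A)" "finite V" using fA less.prems by auto
          show "P4free adj B" using less.prems(2) AB P4free_mono by blast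
          show "(U \<union> A) \<inter> B = {}" "V \<inter> B = {}" using less.prems(5,6) AB by auto
          show "anti adj (U \<union> A) B" by (rule antU)
          show "compl adj V B" using less.prems(8) AB unfolding compl_def by blast
          show "card (U \<union> A) < m" using False by simp
          show "card V < m" by (rule less.prems(10))
          show "4 * m \<le> card B + card (U \<union> A) + card V" using cU cS less.prems(11) by linarith
        qed
        moreover have "B \<union> (U \<union> A) \<union> V = S \<union> U \<union> V" using AB by auto
        ultimately show ?thesis by simp
      qed
    next
      case False
      hence True: "compl adj A B" using AB by auto
      have "V \<inter> A = {}" using less.prems(6) AB by auto
      hence cU: "card (V \<union> A) = card V + card A"
        using card_Un_disjoint less.prems(4) fA by blast
      have antU: "compl adj (V \<union> A) B" using True less.prems(8) AB unfolding compl_def by auto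
      show ?thesis
      proof (cases "m \<le> card (V \<union> A)")
        case True
        have "m \<le> card B" using cU cS less.prems small True by linarith
        have "V \<inter> B = {}" using less.prems(6) AB by auto
        moreover have "V \<union> A \<subseteq> S \<union> U \<union> V" "B \<subseteq> S \<union> U \<union> V" using AB(1) by blast+
        moreover have "(V \<union> A) \<inter> B = {}" using calculation(1) AB(2) by blast
        ultimately show ?thesis using True antU \<open>m \<le> card B\<close> by blast
      next
        case False
        have "\<exists>X Y. X \<subseteq> B \<union> U \<union> (V \<union> A) \<and> Y \<subseteq> B \<union> U \<union> (V \<union> A) \<and> X \<inter> Y = {} \<and> m \<le> card X \<and> m \<le> card Y \<and>
           (anti adj X Y \<or> compl adj X Y)"
        proof (rule less.hyps[OF ltB])
          show "finite B" "finite (V \<union> A)" "finite U" using fA less.prems by auto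
          show "P4free adj B" using less.prems(2) AB P4free_mono by blast
          show "(V \<union> A) \<inter> B = {}" "U \<inter> B = {}" using less.prems(5,6) AB by auto
          show "compl adj (V \<union> A) B" by (rule antU)
          show "anti adj U B" using less.prems(7) AB unfolding anti_def by blast
          show "card (V \<union> A) < m" using False by simp
          show "card U < m" by (rule less.prems(9))
          show "4 * m \<le> card B + card U + card (V \<union> A)" using cU cS less.prems(11) by linarith
        qed
        moreover have "B \<union> U \<union> (V \<union> A) = S \<union> U \<union> V" using AB by auto
        ultimately show ?thesis by simp
      qed
    qed
  qed
qed


definition goodE :: "nat \<Rightarrow> nat \<Rightarrow> nat set set \<Rightarrow> bool" where
  "goodE n m E \<longleftrightarrow> (\<forall>X Y. X \<subseteq> {..<n} \<longrightarrow> Y \<subseteq> {..<n} \<longrightarrow> X \<inter> Y = {} \<longrightarrow>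
      card X = m \<longrightarrow> card Y = m \<longrightarrow>
      \<not> anti (\<lambda>x y. {x,y} \<in> E) X Y \<and> \<not> compl (\<lambda>x y. {x,y} \<in> E) X Y)"

lemma find_P4:
  assumes S: "S \<subseteq> {..<n}" and cS: "4 * m \<le> card S" and g: "goodE n m E" and m: "0 < m"
  shows "\<exists>a b c d. induced_P3 n E (a,b,c,d) \<and> {a,b,c,d} \<subseteq> S"
proof (rule ccontr)
  assume nf: "\<not> ?thesis"
  let ?adj = "\<lambda>x y. {x,y} \<in> E"
  have sym: "\<And>x y. ?adj x y = ?adj y x" by (simp add: insert_commute)
  have fS: "finite S" using S finite_subset by blast
  have P: "P4free ?adj S"
    unfolding P4free_def
  proof (intro ballI impI)
    fix a b c d assume h: "a\<in>S" "b\<in>S" "c\<in>S" "d\<in>S" "distinct [a,b,c,d]"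
      "{a,b} \<in> E" "{b,c} \<in> E" "{c,d} \<in> E"
    show "{a,c} \<in> E \<or> {b,d} \<in> E \<or> {a,d} \<in> E"
    proof (rule ccontr)
      assume "\<not> ?thesis"
      hence "induced_P3 n E (a,b,c,d)" using h S unfolding induced_P3_def by auto
      thus False using nf h by blast
    qed
  qed
  have "\<exists>X Y. X \<subseteq> S \<union> {} \<union> {} \<and> Y \<subseteq> S \<union> {} \<union> {} \<and> X \<inter> Y = {} \<and> m \<le> card X \<and> m \<le> card Y \<and>
      (anti ?adj X Y \<or> compl ?adj X Y)"
    by (rule peel[of ?adj S "{}" "{}" m, OF sym fS P]) (use cS m in \<open>auto simp: anti_def compl_def\<close>)
  then obtain X Y where XY: "X \<subseteq> S" "Y \<subseteq> S" "X \<inter> Y = {}" "m \<le> card X" "m \<le> card Y"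
      "anti ?adj X Y \<or> compl ?adj X Y" by auto
  obtain X' where X': "X' \<subseteq> X" "card X' = m" using obtain_subset_with_card_n[OF XY(4)] by blast
  obtain Y' where Y': "Y' \<subseteq> Y" "card Y' = m" using obtain_subset_with_card_n[OF XY(5)] by blast
  have "anti ?adj X' Y' \<or> compl ?adj X' Y'" using XY(6) X'(1) Y'(1) unfolding anti_def compl_def by blast
  moreover have "X' \<subseteq> {..<n}" "Y' \<subseteq> {..<n}" "X' \<inter> Y' = {}" using X' Y' XY S by blast+
  ultimately show False using g X' Y' unfolding goodE_def by blast
qed

lemma finite_tuple_verts: "finite (tuple_verts t)"
  by (cases t) (simp add: tuple_verts_def)

lemma card_tuple_verts: "card (tuple_verts t) \<le> 4"
proof -
  obtain a b c d where t: "t = (a,b,c,d)" by (cases t) auto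
  have "card {a,b,c,d} \<le> 4"
    by (auto simp: card_insert_if)
  thus ?thesis by (simp add: t tuple_verts_def)
qed

lemma greedy:
  assumes n: "n \<ge> 200" and g: "goodE n (n div 5 + 1) E"
  shows "j \<le> n div 100 + 1 \<Longrightarrow> has_disjoint_induced_P3s n E j"
proof (induction j)
  case 0
  show ?case unfolding has_disjoint_induced_P3s_def by (intro exI[of _ "[]"]) simp
next
  case (Suc j)
  then obtain xs where xs: "length xs = j" "\<forall>t\<in>set xs. induced_P3 n E t"
    "\<forall>i<j. \<forall>k<j. i \<noteq> k \<longrightarrow> tuple_verts (xs ! i) \<inter> tuple_verts (xs ! k) = {}"
    unfolding has_disjoint_induced_P3s_def by auto
  let ?used = "\<Union>t\<in>set xs. tuple_verts t"
  let ?S = "{..<n} - ?used"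
  have "card ?used \<le> (\<Sum>t\<in>set xs. card (tuple_verts t))" by (rule card_UN_le) (auto simp: finite_tuple_verts)
  also have "\<dots> \<le> card (set xs) * 4" using sum_bounded_above[of "set xs" "\<lambda>t. card (tuple_verts t)" 4]
    card_tuple_verts by simp
  also have "\<dots> \<le> j * 4" using card_length[of xs] xs(1) by simp
  finally have cu: "card ?used \<le> j * 4" .
  have "card {..<n} - card ?used \<le> card ?S" by (rule diff_card_le_card_Diff) (simp add: finite_tuple_verts)
  hence "n - j * 4 \<le> card ?S" using cu by simp
  moreover have "4 * (n div 5 + 1) \<le> n - j * 4"
  proof -
    have h: "100 * (n div 100) \<le> n" "5 * (n div 5) \<le> n" by simp_all
    have aux: "\<And>q r. 100 * q \<le> n \<Longrightarrow> 5 * r \<le> n \<Longrightarrow> Suc j \<le> q + 1 \<Longrightarrow> 4 * (r + 1) + j * 4 \<le> n"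
    proof -
      fix q r assume a: "100 * q \<le> n" "5 * r \<le> n" "Suc j \<le> q + 1"
      have "100 * j \<le> n" using a(1,3) by linarith
      have "100 * r \<le> 20 * n" using a(2) by linarith
      hence "100 * r + 100 * j + 100 \<le> 25 * n" using \<open>100 * j \<le> n\<close> n by linarith
      thus "4 * (r + 1) + j * 4 \<le> n" by (simp add: algebra_simps)
    qed
    have "4 * (n div 5 + 1) + j * 4 \<le> n" by (rule aux[OF h Suc.prems])
    thus ?thesis by linarith
  qed
  ultimately have "4 * (n div 5 + 1) \<le> card ?S" by linarith
  hence "\<exists>a b c d. induced_P3 n E (a,b,c,d) \<and> {a,b,c,d} \<subseteq> ?S"
    by (intro find_P4[OF _ _ g]) auto
  then obtain a b c d where abcd: "induced_P3 n E (a,b,c,d)" "{a,b,c,d} \<subseteq> ?S"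
    by blast
  let ?t = "(a,b,c,d)"
  have tv: "tuple_verts ?t \<subseteq> ?S" using abcd(2) by (simp add: tuple_verts_def)
  show ?case unfolding has_disjoint_induced_P3s_def
  proof (intro exI[of _ "xs @ [?t]"] conjI allI impI)
    show "length (xs @ [?t]) = Suc j" using xs by simp
    show "\<forall>t\<in>set (xs @ [?t]). induced_P3 n E t" using xs abcd by auto
    fix i k assume ik: "i < Suc j" "k < Suc j" "i \<noteq> k"
    have nth: "\<And>l. l < Suc j \<Longrightarrow> (xs @ [?t]) ! l = (if l < j then xs ! l else ?t)"
      using xs(1) by (auto simp: nth_append)
    have disj: "\<And>l. l < j \<Longrightarrow> tuple_verts (xs ! l) \<inter> tuple_verts ?t = {}"
    proof -
      fix l assume "l < j"
      hence "xs ! l \<in> set xs" using xs(1) by simp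
      thus "tuple_verts (xs ! l) \<inter> tuple_verts ?t = {}" using tv by blast
    qed
    show "tuple_verts ((xs @ [?t]) ! i) \<inter> tuple_verts ((xs @ [?t]) ! k) = {}"
      using ik nth[OF ik(1)] nth[OF ik(2)] xs(3) disj[of i] disj[of k] by (auto simp: Int_commute)
  qed
qed



lemma finite_all_edges: "finite (all_edges n)"
proof -
  have "all_edges n \<subseteq> Pow {..<n}" unfolding all_edges_def by auto
  thus ?thesis using finite_subset by blast
qed

lemma sum_sup:
  fixes p :: real
  assumes U: "finite U" and F: "F \<subseteq> U"
  shows "(\<Sum>E\<in>Pow U. if F \<subseteq> E then p ^ card E * (1 - p) ^ (card U - card E) else 0) = p ^ card F"
proof -
  let ?f2 = "\<lambda>e. if e \<in> F then 0 else 1 - p"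
  have "(\<Prod>e\<in>U. p + ?f2 e) = (\<Sum>X\<in>Pow U. (\<Prod>e\<in>X. p) * (\<Prod>e\<in>U-X. ?f2 e))"
    by (rule prod_add[OF U])
  also have "\<dots> = (\<Sum>E\<in>Pow U. if F \<subseteq> E then p ^ card E * (1 - p) ^ (card U - card E) else 0)"
  proof (rule sum.cong)
    fix X assume X: "X \<in> Pow U"
    have fX: "finite X" using X U finite_subset by auto
    show "(\<Prod>e\<in>X. p) * (\<Prod>e\<in>U-X. ?f2 e) = (if F \<subseteq> X then p ^ card X * (1 - p) ^ (card U - card X) else 0)"
    proof (cases "F \<subseteq> X")
      case True
      have "(\<Prod>e\<in>U-X. ?f2 e) = (\<Prod>e\<in>U-X. 1 - p)" using True by (intro prod.cong) auto
      also have "\<dots> = (1 - p) ^ (card U - card X)" using X U by (simp add: card_Diff_subset fX)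
      finally show ?thesis using True by simp
    next
      case False
      then obtain e where "e \<in> F" "e \<notin> X" by auto
      hence "(\<Prod>e\<in>U-X. ?f2 e) = 0" using F U by (intro prod_zero) auto
      thus ?thesis using False by simp
    qed
  qed simp
  finally have 1: "(\<Prod>e\<in>U. p + ?f2 e) = (\<Sum>E\<in>Pow U. if F \<subseteq> E then p ^ card E * (1 - p) ^ (card U - card E) else 0)" .
  have "(\<Prod>e\<in>U. p + ?f2 e) = (\<Prod>e\<in>U. if e \<in> F then p else 1)" by (intro prod.cong) auto
  also have "\<dots> = (\<Prod>e\<in>U \<inter> {e. e \<in> F}. p) * (\<Prod>e\<in>U \<inter> - {e. e \<in> F}. 1)"
    by (rule prod.If_cases[OF U])
  also have "U \<inter> {e. e \<in> F} = F" using F by auto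
  finally show ?thesis using 1 by simp
qed

lemma sum_disj:
  fixes p :: real
  assumes U: "finite U" and F: "F \<subseteq> U"
  shows "(\<Sum>E\<in>Pow U. if E \<inter> F = {} then p ^ card E * (1 - p) ^ (card U - card E) else 0) = (1 - p) ^ card F"
proof -
  let ?f1 = "\<lambda>e. if e \<in> F then 0 else p"
  have "(\<Prod>e\<in>U. ?f1 e + (1 - p)) = (\<Sum>X\<in>Pow U. (\<Prod>e\<in>X. ?f1 e) * (\<Prod>e\<in>U-X. 1 - p))"
    by (rule prod_add[OF U])
  also have "\<dots> = (\<Sum>E\<in>Pow U. if E \<inter> F = {} then p ^ card E * (1 - p) ^ (card U - card E) else 0)"
  proof (rule sum.cong)
    fix X assume X: "X \<in> Pow U"
    have fX: "finite X" using X U finite_subset by auto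
    have c: "(\<Prod>e\<in>U-X. 1 - p) = (1 - p) ^ (card U - card X)" using X U by (simp add: card_Diff_subset fX)
    show "(\<Prod>e\<in>X. ?f1 e) * (\<Prod>e\<in>U-X. 1 - p) = (if X \<inter> F = {} then p ^ card X * (1 - p) ^ (card U - card X) else 0)"
    proof (cases "X \<inter> F = {}")
      case True
      have "(\<Prod>e\<in>X. ?f1 e) = (\<Prod>e\<in>X. p)" using True by (intro prod.cong) auto
      thus ?thesis using True c by simp
    next
      case False
      hence "(\<Prod>e\<in>X. ?f1 e) = 0" using fX by (intro prod_zero) auto
      thus ?thesis using False by simp
    qed
  qed simp
  finally have 1: "(\<Prod>e\<in>U. ?f1 e + (1 - p)) = (\<Sum>E\<in>Pow U. if E \<inter> F = {} then p ^ card E * (1 - p) ^ (card U - card E) else 0)" .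
  have "(\<Prod>e\<in>U. ?f1 e + (1 - p)) = (\<Prod>e\<in>U. if e \<in> F then 1 - p else 1)" by (intro prod.cong) auto
  also have "\<dots> = (\<Prod>e\<in>U \<inter> {e. e \<in> F}. 1 - p) * (\<Prod>e\<in>U \<inter> - {e. e \<in> F}. 1)"
    by (rule prod.If_cases[OF U])
  also have "U \<inter> {e. e \<in> F} = F" using F by auto
  finally show ?thesis using 1 by simp
qed

lemma union_bound:
  fixes w :: "'b \<Rightarrow> real"
  assumes I: "finite I" and D: "finite D" and w: "\<And>E. E \<in> D \<Longrightarrow> 0 \<le> w E"
  shows "(\<Sum>E\<in>D. if \<exists>i\<in>I. Q i E then w E else 0) \<le> (\<Sum>i\<in>I. \<Sum>E\<in>D. if Q i E then w E else 0)"
proof -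
  have "(\<Sum>E\<in>D. if \<exists>i\<in>I. Q i E then w E else 0) \<le> (\<Sum>E\<in>D. \<Sum>i\<in>I. if Q i E then w E else 0)"
  proof (rule sum_mono)
    fix E assume E: "E \<in> D"
    show "(if \<exists>i\<in>I. Q i E then w E else 0) \<le> (\<Sum>i\<in>I. if Q i E then w E else 0)"
    proof (cases "\<exists>i\<in>I. Q i E")
      case True
      then obtain i where i: "i \<in> I" "Q i E" by blast
      have "(if Q i E then w E else 0) \<le> (\<Sum>i\<in>I. if Q i E then w E else 0)"
        by (rule member_le_sum[OF i(1)]) (use w E I in auto)
      thus ?thesis using True i by simp
    next
      case False
      thus ?thesis using w E by (simp add: sum_nonneg)
    qed
  qed
  also have "\<dots> = (\<Sum>i\<in>I. \<Sum>E\<in>D. if Q i E then w E else 0)" by (rule sum.swap)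
  finally show ?thesis .
qed

lemma tail_aux:
  fixes q M N :: real
  assumes N: "N > 0" and m5: "N \<le> 5 * M" and h: "100 \<le> N * (1 - q)" and q1: "q \<le> 1"
  shows "4 * N \<le> M * M * (1 - q)"
proof -
  have M0: "0 \<le> M" using N m5 by linarith
  have "N * N \<le> (5 * M) * (5 * M)" using m5 N by (intro mult_mono) auto
  hence a1: "N * N \<le> 25 * (M * M)" by simp
  have "4 * (N * N) \<le> 100 * (M * M)" using a1 by linarith
  also have "\<dots> \<le> (N * (1 - q)) * (M * M)" using h M0 by (intro mult_right_mono) auto
  finally have "N * (4 * N) \<le> N * (M * M * (1 - q))" by (simp add: mult_ac)
  thus ?thesis using N by simp
qed

lemma tail:
  fixes q :: real and n :: nat
  assumes q: "0 \<le> q" and n: "n > 0" and h: "100 / real n \<le> 1 - q"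
  shows "q ^ ((n div 5 + 1) * (n div 5 + 1)) \<le> exp (- 4 * real n)"
proof -
  let ?m = "n div 5 + 1"
  have "q \<le> exp (q - 1)" using exp_ge_add_one_self[of "q - 1"] by simp
  hence "q ^ (?m * ?m) \<le> exp (q - 1) ^ (?m * ?m)" using q by (intro power_mono) auto
  also have "\<dots> = exp (real (?m * ?m) * (q - 1))" by (rule exp_of_nat_mult[symmetric])
  also have "\<dots> \<le> exp (- 4 * real n)"
  proof -
    have "n \<le> 5 * ?m" by presburger
    hence m5: "real n \<le> 5 * real ?m" by (metis of_nat_le_iff of_nat_mult of_nat_numeral)
    have h2: "100 \<le> real n * (1 - q)" using h n by (simp add: field_simps)
    have "0 \<le> 100 / real n" by simp
    hence q1: "q \<le> 1" using h by linarith
    have "4 * real n \<le> real ?m * real ?m * (1 - q)"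
      by (rule tail_aux[OF _ m5 h2 q1]) (use n in simp)
    hence "- 4 * real n \<ge> real (?m * ?m) * (q - 1)" by (simp add: algebra_simps)
    thus ?thesis by simp
  qed
  finally show ?thesis .
qed



lemma pair_edges:
  assumes X: "X \<subseteq> {..<n}" and Y: "Y \<subseteq> {..<n}" and XY: "X \<inter> Y = {}"
  shows "(\<lambda>(x,y). {x,y}) ` (X \<times> Y) \<subseteq> all_edges n"
    "card ((\<lambda>(x,y). {x,y}) ` (X \<times> Y)) = card X * card Y"
    "compl (\<lambda>x y. {x,y} \<in> E) X Y \<longleftrightarrow> (\<lambda>(x,y). {x,y}) ` (X \<times> Y) \<subseteq> E"
    "anti (\<lambda>x y. {x,y} \<in> E) X Y \<longleftrightarrow> E \<inter> (\<lambda>(x,y). {x,y}) ` (X \<times> Y) = {}"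
proof -
  show "(\<lambda>(x,y). {x,y}) ` (X \<times> Y) \<subseteq> all_edges n"
    using X Y XY unfolding all_edges_def by fastforce
  have "inj_on (\<lambda>(x,y). {x,y}) (X \<times> Y)"
    unfolding inj_on_def using XY by (auto simp: doubleton_eq_iff)
  thus "card ((\<lambda>(x,y). {x,y}) ` (X \<times> Y)) = card X * card Y"
    by (simp add: card_image card_cartesian_product)
  show "compl (\<lambda>x y. {x,y} \<in> E) X Y \<longleftrightarrow> (\<lambda>(x,y). {x,y}) ` (X \<times> Y) \<subseteq> E"
    unfolding compl_def by auto
  show "anti (\<lambda>x y. {x,y} \<in> E) X Y \<longleftrightarrow> E \<inter> (\<lambda>(x,y). {x,y}) ` (X \<times> Y) = {}"
    unfolding anti_def by auto
qed

theorem mainTheorem13: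
  shows "\<exists>c::real. c > 0 \<and> (\<exists>n0::nat. \<forall>n\<ge>n0. \<forall>p::real.
     100 / real n \<le> p \<and> p \<le> 1 - 100 / real n \<longrightarrow>
     gnp_prob n p (\<lambda>E. \<exists>k. real k \<ge> real n / 100 \<and> has_disjoint_induced_P3s n E k)
       \<ge> 1 - exp (- c * real n))"
proof (intro exI conjI allI impI)
  show "(1::real) > 0" by simp
  fix n :: nat and p :: real
  assume n: "200 \<le> n" and pb: "100 / real n \<le> p \<and> p \<le> 1 - 100 / real n"
  have n0: "n > 0" using n by simp
  have d0: "0 \<le> 100 / real n" by simp
  have p0: "0 \<le> p" using pb d0 by linarith
  have p1: "0 \<le> 1 - p" using pb d0 by linarith
  define m where "m = n div 5 + 1"
  define U where "U = all_edges n"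
  have fU: "finite U" unfolding U_def by (rule finite_all_edges)
  define w where "w E = p ^ card E * (1 - p) ^ (card U - card E)" for E :: "nat set set"
  have w0: "\<And>E. 0 \<le> w E" unfolding w_def using p0 p1 by simp
  define I where "I = {(X,Y). X \<subseteq> {..<n} \<and> Y \<subseteq> {..<n} \<and> X \<inter> Y = {} \<and> card X = m \<and> card Y = m}"
  have I_sub: "I \<subseteq> Pow {..<n} \<times> Pow {..<n}" unfolding I_def by auto
  have fI: "finite I" using I_sub finite_subset by blast
  have cI: "real (card I) \<le> 4 ^ n"
  proof -
    have "card I \<le> card (Pow {..<n} \<times> Pow {..<n :: nat})" by (rule card_mono[OF _ I_sub]) simp
    also have "\<dots> = 2 ^ n * 2 ^ n" by (simp add: card_cartesian_product card_Pow)
    also have "\<dots> = 4 ^ n" by (simp add: power_mult_distrib[symmetric])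
    finally show ?thesis by (metis of_nat_le_iff of_nat_numeral of_nat_power)
  qed
  define Q where "Q i E = (compl (\<lambda>x y. {x,y} \<in> E) (fst i) (snd i) \<or> anti (\<lambda>x y. {x,y} \<in> E) (fst i) (snd i))"
    for i :: "nat set \<times> nat set" and E :: "nat set set"
  let ?P = "\<lambda>E. \<exists>k. real k \<ge> real n / 100 \<and> has_disjoint_induced_P3s n E k"
  have goodP: "\<And>E. \<not> (\<exists>i\<in>I. Q i E) \<Longrightarrow> ?P E"
  proof -
    fix E assume nb: "\<not> (\<exists>i\<in>I. Q i E)"
    have "goodE n m E" unfolding goodE_def
    proof (intro allI impI)
      fix X Y assume h: "X \<subseteq> {..<n}" "Y \<subseteq> {..<n}" "X \<inter> Y = {}" "card X = m" "card Y = m"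
      hence "(X,Y) \<in> I" unfolding I_def by simp
      thus "\<not> anti (\<lambda>x y. {x, y} \<in> E) X Y \<and> \<not> compl (\<lambda>x y. {x, y} \<in> E) X Y"
        using nb unfolding Q_def by auto
    qed
    hence "has_disjoint_induced_P3s n E (n div 100 + 1)"
      using greedy[OF n, of E] unfolding m_def by simp
    moreover have "real (n div 100 + 1) \<ge> real n / 100"
    proof -
      have "n \<le> 100 * (n div 100 + 1)" by presburger
      hence "real n \<le> 100 * real (n div 100 + 1)" by (metis of_nat_le_iff of_nat_mult of_nat_numeral)
      thus ?thesis by simp
    qed
    ultimately show "?P E" by blast
  qed
  have bound_i: "\<And>i. i \<in> I \<Longrightarrow> (\<Sum>E\<in>Pow U. if Q i E then w E else 0) \<le> 2 * exp (- 4 * real n)"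
  proof -
    fix i assume i: "i \<in> I"
    obtain X Y where XY: "i = (X,Y)" by (cases i)
    have h: "X \<subseteq> {..<n}" "Y \<subseteq> {..<n}" "X \<inter> Y = {}" "card X = m" "card Y = m"
      using i unfolding XY I_def by auto
    let ?F = "(\<lambda>(x,y). {x,y}) ` (X \<times> Y)"
    have FU: "?F \<subseteq> U" and cF: "card ?F = m * m" using pair_edges[OF h(1-3)] h unfolding U_def by auto
    have "(\<Sum>E\<in>Pow U. if Q i E then w E else 0) \<le>
          (\<Sum>E\<in>Pow U. (if ?F \<subseteq> E then w E else 0) + (if E \<inter> ?F = {} then w E else 0))"
      by (rule sum_mono) (use w0 in \<open>auto simp: Q_def XY pair_edges[OF h(1-3)]\<close>)
    also have "\<dots> = p ^ card ?F + (1 - p) ^ card ?F"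
      unfolding sum.distrib w_def using sum_sup[OF fU FU, of p] sum_disj[OF fU FU, of p] by simp
    also have "\<dots> \<le> exp (- 4 * real n) + exp (- 4 * real n)"
    proof (intro add_mono)
      show "p ^ card ?F \<le> exp (- 4 * real n)" unfolding cF m_def
        by (rule tail[OF p0 n0]) (use pb in linarith)
      show "(1 - p) ^ card ?F \<le> exp (- 4 * real n)" unfolding cF m_def
        by (rule tail[OF p1 n0]) (use pb in linarith)
    qed
    finally show "(\<Sum>E\<in>Pow U. if Q i E then w E else 0) \<le> 2 * exp (- 4 * real n)" by simp
  qed
  have tot: "(\<Sum>E\<in>Pow U. w E) = 1"
    using sum_sup[OF fU, of "{}" p] unfolding w_def by simp
  have "(\<Sum>E\<in>Pow U. if \<exists>i\<in>I. Q i E then w E else 0) \<le> (\<Sum>i\<in>I. \<Sum>E\<in>Pow U. if Q i E then w E else 0)"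
    by (rule union_bound[OF fI]) (use fU w0 in auto)
  also have "\<dots> \<le> (\<Sum>i\<in>I. 2 * exp (- 4 * real n))" by (rule sum_mono) (rule bound_i)
  also have "\<dots> = real (card I) * (2 * exp (- 4 * real n))" by simp
  also have "\<dots> \<le> exp (2 * real n) * (exp (real n) * exp (- 4 * real n))"
  proof (rule mult_mono)
    have "(4::real) \<le> exp 2"
    proof -
      have "(2::real) \<le> exp 1" using exp_ge_add_one_self[of 1] by simp
      hence "2 * 2 \<le> exp 1 * exp (1::real)" by (intro mult_mono) auto
      thus ?thesis by (simp add: exp_add[symmetric])
    qed
    hence "(4::real) ^ n \<le> exp 2 ^ n" by (intro power_mono) auto
    also have "\<dots> = exp (2 * real n)" by (simp add: exp_of_nat_mult[symmetric] mult.commute)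
    finally show "real (card I) \<le> exp (2 * real n)" using cI by linarith
    have "2 \<le> exp (real n)" using exp_ge_add_one_self[of "real n"] n by linarith
    thus "2 * exp (- 4 * real n) \<le> exp (real n) * exp (- 4 * real n)" by (intro mult_right_mono) auto
  qed auto
  also have "\<dots> = exp (- 1 * real n)" by (simp add: exp_add[symmetric])
  finally have bad: "(\<Sum>E\<in>Pow U. if \<exists>i\<in>I. Q i E then w E else 0) \<le> exp (- 1 * real n)" .
  have "(\<Sum>E\<in>Pow U. w E) = (\<Sum>E\<in>Pow U. if \<exists>i\<in>I. Q i E then w E else 0) + (\<Sum>E\<in>Pow U. if \<exists>i\<in>I. Q i E then 0 else w E)"
    unfolding sum.distrib[symmetric] by (intro sum.cong) auto
  hence "1 - exp (- 1 * real n) \<le> (\<Sum>E\<in>Pow U. if \<exists>i\<in>I. Q i E then 0 else w E)" using tot bad by linarith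
  also have "\<dots> \<le> (\<Sum>E\<in>Pow U. if ?P E then w E else 0)"
  proof (rule sum_mono)
    fix E assume "E \<in> Pow U"
    show "(if \<exists>i\<in>I. Q i E then 0 else w E) \<le> (if ?P E then w E else 0)"
      using goodP[of E] w0[of E] by (cases "\<exists>i\<in>I. Q i E") auto
  qed
  also have "\<dots> = gnp_prob n p ?P" unfolding gnp_prob_def w_def U_def by simp
  finally show "gnp_prob n p ?P \<ge> 1 - exp (- 1 * real n)" .
qed

end
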